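(* Let $\lambda\in(\frac16,\frac56)$ and $x\in[0,1]\setminus\mathcal E$. Suppose there is a finite $p\ge0$ with $\beta_{1,2}(x,p)=0$ and $\beta_{1,2}(x,p+1)=1$. Then $m_0(x)=\dots=m_p(x)=0$, $m_{p+1}(x)=6\lambda$ if $u_p(x)=1$ and $m_{p+1}(x)=-6\lambda$ if $u_p(x)=2$, and for all $n\ge p+1$: $m_{n+1}(x)=m_n(x)$ if $u_n(x)\in\{0,3\}$; $m_{n+1}(x)=\mathrm{sgn}(m_n(x))\big(|m_n(x)|+6\lambda\sqrt{1+m_n(x)^2}\big)$ if $u_n(x)=1$; $m_{n+1}(x)=\mathrm{sgn}(m_n(x))\big(|m_n(x)|-6\lambda\sqrt{1+m_n(x)^2}\big)$ if $u_n(x)=2$.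
   Context: Construction: $F^\lambda_0\equiv0$ on $[0,1]$ (one interval of generation $0$). Given $F^\lambda_n$ with its $4^n$ closed intervals of generation $n$ (covering $[0,1]$, disjoint interiors, $F^\lambda_n$ affine on each), on each interval $[a,b]$ of generation $n$, with $\ell=b-a$ and slope $m$, $F^\lambda_{n+1}$ coincides with $F^\lambda_n$ at $a,a+\ell/3,a+2\ell/3,b$, equals $F^\lambda_n(a+\ell/2)+\lambda\ell\sqrt{1+m^2}$ at $a+\ell/2$, and is affine on $[a,a+\ell/3],[a+\ell/3,a+\ell/2],[a+\ell/2,a+2\ell/3],[a+2\ell/3,b]$. Dynamics: $T(x)=3x$ on $[0,\frac13)$, $6x-2$ on $[\frac13,\frac12)$, $4-6x$ on $[\frac12,\frac23)$, $3x-2$ on $[\frac23,1]$; $U(x)=0,1,2,3$ on these intervals respectively; $u_n(x)=U(T^nx)$; $\beta_i(x,n)=\#\{k<n:u_k(x)=i\}$, $\beta_{1,2}=\beta_1+\beta_2$. $\mathcal E$ is the set of $x$ whose digit sequence $(u_n(x))$ is eventually constantly $0$ or eventually constantly $3$; for $x\notin\mathcal E$, $F^\lambda_n$ is differentiable at $x$ and $m_n(x)$ is its slope at $x$. *)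

theory Defs
  imports "HOL-Analysis.Analysis"
begin

text \<open>The graph of F^lam_n is represented by its list of knots (x, F(x)), sorted from 0 to 1.
  One refinement step replaces every interval [a,b] of generation n (consecutive knots) by the
  four intervals of generation n+1, with new knot values as in the construction.\<close>

fun refine :: "real \<Rightarrow> (real \<times> real) list \<Rightarrow> (real \<times> real) list" where
  "refine lam ((a, fa) # (b, fb) # rest) =
     (let l = b - a; m = (fb - fa) / l in
        (a, fa) # (a + l/3, fa + m * (l/3))
        # (a + l/2, fa + m * (l/2) + lam * l * sqrt (1 + m\<^sup>2))
        # (a + 2*l/3, fa + m * (2*l/3))
        # refine lam ((b, fb) # rest))"
| "refine lam [p] = [p]"
| "refine lam [] = []"

definition knots :: "real \<Rightarrow> nat \<Rightarrow> (real \<times> real) list" where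
  "knots lam n = (refine lam ^^ n) [(0, 0), (1, 0)]"

fun pl_interp :: "(real \<times> real) list \<Rightarrow> real \<Rightarrow> real" where
  "pl_interp ((a, fa) # (b, fb) # rest) y =
     (if y \<le> b then fa + (fb - fa) / (b - a) * (y - a) else pl_interp ((b, fb) # rest) y)"
| "pl_interp [(a, fa)] y = fa"
| "pl_interp [] y = 0"

definition F :: "real \<Rightarrow> nat \<Rightarrow> real \<Rightarrow> real" where
  "F lam n = pl_interp (knots lam n)"

definition slope :: "real \<Rightarrow> nat \<Rightarrow> real \<Rightarrow> real" where
  "slope lam n x = deriv (F lam n) x"

definition T :: "real \<Rightarrow> real" where
  "T x = (if x < 1/3 then 3*x else if x < 1/2 then 6*x - 2 else if x < 2/3 then 4 - 6*x else 3*x - 2)"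

definition U :: "real \<Rightarrow> nat" where
  "U x = (if x < 1/3 then 0 else if x < 1/2 then 1 else if x < 2/3 then 2 else 3)"

definition u :: "nat \<Rightarrow> real \<Rightarrow> nat" where
  "u n x = U ((T ^^ n) x)"

definition beta :: "nat \<Rightarrow> real \<Rightarrow> nat \<Rightarrow> nat" where
  "beta i x n = card {k. k < n \<and> u k x = i}"

definition beta12 :: "real \<Rightarrow> nat \<Rightarrow> nat" where
  "beta12 x n = beta 1 x n + beta 2 x n"

definition Ecal :: "real set" where
  "Ecal = {x. \<exists>N. \<forall>n\<ge>N. u n x = 0} \<union> {x. \<exists>N. \<forall>n\<ge>N. u n x = 3}"

end

theory Submission
  imports Defs
begin


definition srt :: "(real \<times> real) list \<Rightarrow> bool" where
  "srt ks = sorted_wrt (\<lambda>p q. fst p < fst q) ks"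

lemma transp_fst: "transp (\<lambda>p q. fst (p::real\<times>real) < fst q)"
  by (auto simp: transp_def)

lemma refine_hd: "\<exists>zs. refine lam (q # ys) = q # zs"
  by (cases q; cases ys) (auto simp: Let_def)

lemma srt_refine: "srt ks \<Longrightarrow> srt (refine lam ks)"
proof (induction lam ks rule: refine.induct)
  case (1 lam a fa b fb rest)
  obtain zs where z: "refine lam ((b, fb) # rest) = (b, fb) # zs" using refine_hd by blast
  have ab: "a < b" and s: "srt ((b,fb)#rest)" using 1(2) by (auto simp: srt_def sorted_wrt2[OF transp_fst])
  have "srt ((b, fb) # zs)" using 1(1) s z by (simp add: Let_def)
  then have zz: "\<forall>x\<in>set zs. b < fst x" and zs: "sorted_wrt (\<lambda>p q. fst p < fst q) zs"
    by (auto simp: srt_def)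
  show ?case using ab z zz zs
    by (fastforce simp: Let_def srt_def sorted_wrt2[OF transp_fst] field_simps)
qed (auto simp: srt_def)

lemma refine_app:
  "\<exists>zs ws. refine lam (xs @ (a,fa) # (b,fb) # ys) =
     zs @ (a,fa) # (a + (b-a)/3, fa + (fb-fa)/(b-a) * ((b-a)/3))
        # (a + (b-a)/2, fa + (fb-fa)/(b-a) * ((b-a)/2) + lam * (b-a) * sqrt (1 + ((fb-fa)/(b-a))\<^sup>2))
        # (a + 2*(b-a)/3, fa + (fb-fa)/(b-a) * (2*(b-a)/3)) # (b,fb) # ws"
proof (induction xs)
  case Nil
  obtain zs where z: "refine lam ((b, fb) # ys) = (b, fb) # zs" using refine_hd by blast
  show ?case by (rule exI[of _ "[]"], rule exI[of _ zs]) (simp only: z Let_def refine.simps(1) append.simps)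
next
  case (Cons c xs)
  then obtain zs ws where zw: "refine lam (xs @ (a,fa) # (b,fb) # ys) =
     zs @ (a,fa) # (a + (b-a)/3, fa + (fb-fa)/(b-a) * ((b-a)/3))
        # (a + (b-a)/2, fa + (fb-fa)/(b-a) * ((b-a)/2) + lam * (b-a) * sqrt (1 + ((fb-fa)/(b-a))\<^sup>2))
        # (a + 2*(b-a)/3, fa + (fb-fa)/(b-a) * (2*(b-a)/3)) # (b,fb) # ws" by blast
  obtain d L where dL: "xs @ (a,fa) # (b,fb) # ys = d # L" by (cases "xs @ (a,fa) # (b,fb) # ys") auto
  obtain c1 c2 where c: "c = (c1,c2)" by (cases c)
  obtain d1 d2 where d: "d = (d1,d2)" by (cases d)
  have "refine lam ((c # xs) @ (a,fa) # (b,fb) # ys) = refine lam (c # d # L)" using dL by simp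
  also have "\<dots> = [c, (c1 + (d1-c1)/3, c2 + (d2-c2)/(d1-c1) * ((d1-c1)/3)),
     (c1 + (d1-c1)/2, c2 + (d2-c2)/(d1-c1) * ((d1-c1)/2) + lam * (d1-c1) * sqrt (1 + ((d2-c2)/(d1-c1))\<^sup>2)),
     (c1 + 2*(d1-c1)/3, c2 + (d2-c2)/(d1-c1) * (2*(d1-c1)/3))] @ refine lam (d # L)"
    using dL by (simp only: c d Let_def refine.simps(1) append.simps)
  finally show ?case using zw dL by (metis append.assoc)
qed

definition consec :: "(real \<times> real) list \<Rightarrow> real \<Rightarrow> real \<Rightarrow> real \<Rightarrow> real \<Rightarrow> bool" where
  "consec ks a fa b fb = (\<exists>xs ys. ks = xs @ (a,fa) # (b,fb) # ys)"

lemma pl_interp_seg: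
  assumes "srt (xs @ (a,fa) # (b,fb) # ys)" "a < y" "y \<le> b"
  shows "pl_interp (xs @ (a,fa) # (b,fb) # ys) y = fa + (fb - fa) / (b - a) * (y - a)"
  using assms(1)
proof (induction xs)
  case Nil then show ?case using assms by simp
next
  case (Cons c xs)
  obtain d L where dL: "xs @ (a,fa) # (b,fb) # ys = d # L" by (cases "xs @ (a,fa) # (b,fb) # ys") auto
  have s: "srt (xs @ (a,fa) # (b,fb) # ys)" using Cons(2) by (simp add: srt_def)
  have "fst d \<le> a"
  proof (cases xs)
    case Nil then show ?thesis using dL by auto
  next
    case (Cons e es)
    then have "d \<in> set xs" using dL by simp
    then show ?thesis using s by (auto simp: srt_def sorted_wrt_append)
  qed
  then have "pl_interp (c # d # L) y = pl_interp (d # L) y" using assms(2)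
    by (cases c; cases d) auto
  then show ?case using Cons.IH s dL by simp
qed



lemma knots_Suc: "knots lam (Suc n) = refine lam (knots lam n)"
  by (simp add: knots_def)

lemma srt_knots: "srt (knots lam n)"
  by (induction n) (auto simp: knots_Suc srt_refine, simp add: knots_def srt_def)

lemma slope_seg:
  assumes "consec (knots lam n) a fa b fb" "a < x" "x < b"
  shows "slope lam n x = (fb - fa) / (b - a)"
proof -
  obtain xs ys where k: "knots lam n = xs @ (a,fa) # (b,fb) # ys" using assms(1) by (auto simp: consec_def)
  have eq: "fa + (fb - fa) / (b - a) * (y - a) = F lam n y" if "y \<in> {a<..<b}" for y
  proof -
    have "a < y" "y \<le> b" using that by auto
    then show ?thesis using pl_interp_seg[of xs a fa b fb ys y] srt_knots[of lam n] k by (simp add: F_def)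
  qed
  have "((\<lambda>y. fa + (fb - fa) / (b - a) * (y - a)) has_real_derivative (fb - fa) / (b - a)) (at x)"
    using assms by (auto intro!: derivative_eq_intros)
  then have "(F lam n has_real_derivative (fb - fa) / (b - a)) (at x)"
    by (rule has_field_derivative_transform_within_open[where S="{a<..<b}"]) (use assms eq in auto)
  then show ?thesis unfolding slope_def by (rule DERIV_imp_deriv)
qed

definition Tpos :: "real \<Rightarrow> real" where
  "Tpos r = (if r < 1/3 then 3*r else if r < 1/2 then 6*r - 2 else if r < 2/3 then 6*r - 3 else 3*r - 2)"

lemma step:
  assumes "consec (knots lam n) a fa b fb" "a < x" "x < b"
    and "(x-a)/(b-a) \<notin> {1/3, 1/2, 2/3}"
  shows "\<exists>a' fa' b' fb'. consec (knots lam (Suc n)) a' fa' b' fb' \<and> a' < x \<and> x < b' \<and>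
     (fb' - fa')/(b' - a') = (fb - fa)/(b - a) +
        (if U ((x-a)/(b-a)) = 1 then 6 * lam * sqrt (1 + ((fb - fa)/(b - a))\<^sup>2)
         else if U ((x-a)/(b-a)) = 2 then - (6 * lam * sqrt (1 + ((fb - fa)/(b - a))\<^sup>2)) else 0) \<and>
     (x - a')/(b' - a') = Tpos ((x-a)/(b-a))"
proof -
  define l where "l = b - a"
  define m where "m = (fb - fa)/(b - a)"
  define s where "s = sqrt (1 + m\<^sup>2)"
  define r where "r = (x-a)/(b-a)"
  have l: "l > 0" using assms unfolding l_def by simp
  obtain xs ys where k: "knots lam n = xs @ (a,fa) # (b,fb) # ys" using assms(1) by (auto simp: consec_def)
  obtain zs ws where kk: "knots lam (Suc n) =
     zs @ (a,fa) # (a + l/3, fa + m * (l/3))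
        # (a + l/2, fa + m * (l/2) + lam * l * s)
        # (a + 2*l/3, fa + m * (2*l/3)) # (b,fb) # ws"
    using refine_app[of lam xs a fa b fb ys] unfolding knots_Suc k l_def m_def s_def by blast
  have xr: "x = a + r * l" using l unfolding r_def l_def by (simp add: field_simps)
  have r01: "0 < r" "r < 1" using assms l unfolding r_def l_def by (auto simp: field_simps)
  have b: "b = a + l" "fb = fa + m * l" using l unfolding l_def m_def by (auto simp: field_simps)
  consider "r < 1/3" | "1/3 < r" "r < 1/2" | "1/2 < r" "r < 2/3" | "2/3 < r"
    using assms(4) unfolding r_def by fastforce
  then show ?thesis
  proof cases
    case 1
    have c: "consec (knots lam (Suc n)) (a) (fa) (a + l/3) (fa + m * (l/3))"
      unfolding consec_def kk by (rule exI[of _ "zs"]) auto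
    have e1: "(x - (a))/((a + l/3) - (a)) = 3*r" using l unfolding xr by (simp add: field_simps)
    have e2: "((fa + m * (l/3)) - (fa))/((a + l/3) - (a)) = m" using l unfolding b by (simp add: field_simps)
    have e3: "(a) < x \<and> x < (a + l/3)" using l r01 1 unfolding xr b by (simp add: field_simps)
    have e4: "Tpos r = 3*r" using 1 unfolding Tpos_def by auto
    have e5: "m + (if U r = 1 then 6 * lam * s else if U r = 2 then - (6 * lam * s) else 0) = m"
      using 1 unfolding U_def by auto
    show ?thesis unfolding r_def[symmetric] m_def[symmetric] s_def[symmetric]
      using c e1 e2 e3 e4 e5 by metis
  next
    case 2
    have c: "consec (knots lam (Suc n)) (a + l/3) (fa + m * (l/3)) (a + l/2) (fa + m * (l/2) + lam * l * s)"
      unfolding consec_def kk by (rule exI[of _ "zs @ [(a,fa)]"]) auto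
    have e1: "(x - (a + l/3))/((a + l/2) - (a + l/3)) = 6*r - 2" using l unfolding xr by (simp add: field_simps)
    have e2: "((fa + m * (l/2) + lam * l * s) - (fa + m * (l/3)))/((a + l/2) - (a + l/3)) = m + 6 * lam * s" using l unfolding b by (simp add: field_simps)
    have e3: "(a + l/3) < x \<and> x < (a + l/2)" using l r01 2 unfolding xr b by (simp add: field_simps)
    have e4: "Tpos r = 6*r - 2" using 2 unfolding Tpos_def by auto
    have e5: "m + (if U r = 1 then 6 * lam * s else if U r = 2 then - (6 * lam * s) else 0) = m + 6 * lam * s"
      using 2 unfolding U_def by auto
    show ?thesis unfolding r_def[symmetric] m_def[symmetric] s_def[symmetric]
      using c e1 e2 e3 e4 e5 by metis
  next
    case 3
    have c: "consec (knots lam (Suc n)) (a + l/2) (fa + m * (l/2) + lam * l * s) (a + 2*l/3) (fa + m * (2*l/3))"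
      unfolding consec_def kk by (rule exI[of _ "zs @ [(a,fa), (a + l/3, fa + m * (l/3))]"]) auto
    have e1: "(x - (a + l/2))/((a + 2*l/3) - (a + l/2)) = 6*r - 3" using l unfolding xr by (simp add: field_simps)
    have e2: "((fa + m * (2*l/3)) - (fa + m * (l/2) + lam * l * s))/((a + 2*l/3) - (a + l/2)) = m - 6 * lam * s" using l unfolding b by (simp add: field_simps)
    have e3: "(a + l/2) < x \<and> x < (a + 2*l/3)" using l r01 3 unfolding xr b by (simp add: field_simps)
    have e4: "Tpos r = 6*r - 3" using 3 unfolding Tpos_def by auto
    have e5: "m + (if U r = 1 then 6 * lam * s else if U r = 2 then - (6 * lam * s) else 0) = m - 6 * lam * s"
      using 3 unfolding U_def by auto
    show ?thesis unfolding r_def[symmetric] m_def[symmetric] s_def[symmetric]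
      using c e1 e2 e3 e4 e5 by metis
  next
    case 4
    have c: "consec (knots lam (Suc n)) (a + 2*l/3) (fa + m * (2*l/3)) (b) (fb)"
      unfolding consec_def kk by (rule exI[of _ "zs @ [(a,fa), (a + l/3, fa + m * (l/3)), (a + l/2, fa + m * (l/2) + lam * l * s)]"]) auto
    have e1: "(x - (a + 2*l/3))/((b) - (a + 2*l/3)) = 3*r - 2" using l unfolding xr b by (simp add: field_simps)
    have e2: "((fb) - (fa + m * (2*l/3)))/((b) - (a + 2*l/3)) = m" using l unfolding b by (simp add: field_simps)
    have e3: "(a + 2*l/3) < x \<and> x < (b)" using l r01 4 unfolding xr b by (simp add: field_simps)
    have e4: "Tpos r = 3*r - 2" using 4 unfolding Tpos_def by auto
    have e5: "m + (if U r = 1 then 6 * lam * s else if U r = 2 then - (6 * lam * s) else 0) = m"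
      using 4 unfolding U_def by auto
    show ?thesis unfolding r_def[symmetric] m_def[symmetric] s_def[symmetric]
      using c e1 e2 e3 e4 e5 by metis
  qed
qed



lemma T_Suc: "(T ^^ Suc n) x = T ((T ^^ n) x)" by simp

lemma T_range: "0 \<le> t \<Longrightarrow> t \<le> 1 \<Longrightarrow> 0 \<le> T t \<and> T t \<le> 1"
  unfolding T_def by auto

lemma t_range: "x \<in> {0..1} \<Longrightarrow> 0 \<le> (T ^^ n) x \<and> (T ^^ n) x \<le> 1"
  by (induction n) (auto simp: T_range)

lemma fix0: "n \<le> k \<Longrightarrow> (T ^^ n) x = 0 \<Longrightarrow> (T ^^ k) x = 0"
  by (induction k rule: dec_induct) (auto simp: T_def)

lemma fix1: "n \<le> k \<Longrightarrow> (T ^^ n) x = 1 \<Longrightarrow> (T ^^ k) x = 1"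
  by (induction k rule: dec_induct) (auto simp: T_def)

lemma t_avoid01:
  assumes "x \<notin> Ecal"
  shows "(T ^^ n) x \<noteq> 0 \<and> (T ^^ n) x \<noteq> 1"
proof (intro conjI notI)
  assume "(T ^^ n) x = 0"
  then have "\<forall>k\<ge>n. u k x = 0" using fix0 by (auto simp: u_def U_def)
  then show False using assms unfolding Ecal_def by blast
next
  assume "(T ^^ n) x = 1"
  then have "\<forall>k\<ge>n. u k x = 3" using fix1 by (auto simp: u_def U_def)
  then show False using assms unfolding Ecal_def by blast
qed

lemma t_avoid:
  assumes "x \<notin> Ecal"
  shows "(T ^^ n) x \<notin> {0, 1/3, 1/2, 2/3, 1}"
proof -
  have a: "(T ^^ n) x \<noteq> 0 \<and> (T ^^ n) x \<noteq> 1" "(T ^^ Suc n) x \<noteq> 0 \<and> (T ^^ Suc n) x \<noteq> 1"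
    using t_avoid01[OF assms] by blast+
  then show ?thesis unfolding T_Suc by (auto simp: T_def)
qed

lemma beta_Suc: "beta i x (Suc p) = beta i x p + (if u p x = i then 1 else 0)"
proof -
  have "{k. k < Suc p \<and> u k x = i} = {k. k < p \<and> u k x = i} \<union> (if u p x = i then {p} else {})"
    by (auto simp: less_Suc_eq)
  then show ?thesis unfolding beta_def by (auto simp: card_insert_if)
qed

lemma beta0: "beta i x p = 0 \<Longrightarrow> k < p \<Longrightarrow> u k x \<noteq> i"
  unfolding beta_def by auto

lemma d0: "0 < t \<Longrightarrow> t < 1/3 \<Longrightarrow> U t = 0 \<and> T t = 3*t \<and> Tpos t = 3*t \<and> U (1-t) = 3 \<and> Tpos (1-t) = 1 - 3*t"
  unfolding U_def T_def Tpos_def by auto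
lemma d1: "1/3 < t \<Longrightarrow> t < 1/2 \<Longrightarrow> U t = 1 \<and> T t = 6*t-2 \<and> Tpos t = 6*t-2 \<and> U (1-t) = 2 \<and> Tpos (1-t) = 3 - 6*t"
  unfolding U_def T_def Tpos_def by auto
lemma d2: "1/2 < t \<Longrightarrow> t < 2/3 \<Longrightarrow> U t = 2 \<and> T t = 4-6*t \<and> Tpos t = 6*t-3 \<and> U (1-t) = 1 \<and> Tpos (1-t) = 4 - 6*t"
  unfolding U_def T_def Tpos_def by auto
lemma d3: "2/3 < t \<Longrightarrow> t < 1 \<Longrightarrow> U t = 3 \<and> T t = 3*t-2 \<and> Tpos t = 3*t-2 \<and> U (1-t) = 0 \<and> Tpos (1-t) = 3 - 3*t"
  unfolding U_def T_def Tpos_def by auto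

lemma inv:
  assumes "1/6 < lam" "x \<in> {0..1}" "x \<notin> Ecal"
    and "\<And>k. k < p \<Longrightarrow> u k x \<in> {0,3}" "u p x \<in> {1,2}"
  shows "\<exists>a fa b fb. consec (knots lam n) a fa b fb \<and> a < x \<and> x < b \<and>
     (x - a)/(b - a) = (if (fb - fa)/(b - a) < 0 then 1 - (T ^^ n) x else (T ^^ n) x) \<and>
     (n \<le> p \<longrightarrow> (fb - fa)/(b - a) = 0) \<and> (p < n \<longrightarrow> (fb - fa)/(b - a) \<noteq> 0)"
proof (induction n)
  case 0
  have "x \<noteq> 0" "x \<noteq> 1" using t_avoid01[OF assms(3), of 0] by auto
  then have "0 < x" "x < 1" using assms(2) by auto
  moreover have "consec (knots lam 0) 0 0 1 0" by (auto simp: consec_def knots_def)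
  ultimately show ?case by (intro exI[of _ 0] exI[of _ 1]) auto
next
  case (Suc n)
  then obtain a fa b fb where ab: "consec (knots lam n) a fa b fb" "a < x" "x < b"
    and r: "(x - a)/(b - a) = (if (fb - fa)/(b - a) < 0 then 1 - (T ^^ n) x else (T ^^ n) x)"
    and c1: "n \<le> p \<longrightarrow> (fb - fa)/(b - a) = 0" and c2: "p < n \<longrightarrow> (fb - fa)/(b - a) \<noteq> 0"
    by blast
  define t where "t = (T ^^ n) x"
  define m where "m = (fb - fa)/(b - a)"
  define s where "s = sqrt (1 + m\<^sup>2)"
  define K where "K = 6 * lam * s"
  have tt: "t \<notin> {0, 1/3, 1/2, 2/3, 1}" "0 \<le> t" "t \<le> 1"
    using t_avoid[OF assms(3), of n] t_range[OF assms(2), of n] unfolding t_def by auto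
  have "sqrt (m\<^sup>2) < sqrt (1 + m\<^sup>2)" by (rule real_sqrt_less_mono) simp
  then have "\<bar>m\<bar> < s" unfolding s_def by (simp only: real_sqrt_abs)
  moreover have "1 * s < (6 * lam) * s"
    by (rule mult_strict_right_mono) (use assms(1) \<open>\<bar>m\<bar> < s\<close> in auto)
  ultimately have K: "\<bar>m\<bar> < K" "0 < K" unfolding K_def by auto
  have rr: "(x - a)/(b - a) \<notin> {1/3, 1/2, 2/3}" using r tt unfolding t_def[symmetric] by auto
  obtain a' fa' b' fb' where ab': "consec (knots lam (Suc n)) a' fa' b' fb'" "a' < x" "x < b'"
    and m': "(fb' - fa')/(b' - a') = m + (if U ((x-a)/(b-a)) = 1 then K
         else if U ((x-a)/(b-a)) = 2 then - K else 0)"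
    and r': "(x - a')/(b' - a') = Tpos ((x-a)/(b-a))"
    using step[OF ab rr] unfolding K_def s_def m_def by blast
  have ux: "u n x = U t" unfolding u_def t_def ..
  have tS: "(T ^^ Suc n) x = T t" unfolding t_def by simp
  have cc: "n < p \<Longrightarrow> U t \<in> {0,3}" "n = p \<Longrightarrow> U t \<in> {1,2}" using assms(4)[of n] assms(5) ux by auto
  have rf: "(x - a)/(b - a) = (if m < 0 then 1 - t else t)" using r unfolding m_def t_def .
  have goal: "Tpos (if m < 0 then 1 - t else t) = (if m + (if U (if m < 0 then 1 - t else t) = 1 then K
         else if U (if m < 0 then 1 - t else t) = 2 then - K else 0) < 0 then 1 - T t else T t) \<and>
     (Suc n \<le> p \<longrightarrow> m + (if U (if m < 0 then 1 - t else t) = 1 then K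
         else if U (if m < 0 then 1 - t else t) = 2 then - K else 0) = 0) \<and>
     (p < Suc n \<longrightarrow> m + (if U (if m < 0 then 1 - t else t) = 1 then K
         else if U (if m < 0 then 1 - t else t) = 2 then - K else 0) \<noteq> 0)"
  proof -
    have c1': "n \<le> p \<Longrightarrow> m = 0" and c2': "p < n \<Longrightarrow> m \<noteq> 0" using c1 c2 unfolding m_def by auto
    consider "0 < t" "t < 1/3" | "1/3 < t" "t < 1/2" | "1/2 < t" "t < 2/3" | "2/3 < t" "t < 1"
      using tt by fastforce
    then show ?thesis
    proof cases
      case 1 note d = d0[OF 1]
      then show ?thesis using cc c1' c2' K by (cases "n < p"; cases "n = p"; cases "m < 0") auto
    next
      case 2 note d = d1[OF 2]
      then show ?thesis using cc c1' c2' K by (cases "n < p"; cases "n = p"; cases "m < 0") auto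
    next
      case 3 note d = d2[OF 3]
      then show ?thesis using cc c1' c2' K by (cases "n < p"; cases "n = p"; cases "m < 0") auto
    next
      case 4 note d = d3[OF 4]
      then show ?thesis using cc c1' c2' K by (cases "n < p"; cases "n = p"; cases "m < 0") auto
    qed
  qed
  show ?case
    apply (rule exI[of _ a'], rule exI[of _ fa'], rule exI[of _ b'], rule exI[of _ fb'])
    unfolding m' r' tS rf using ab' goal by simp
qed

lemma slopes:
  assumes "1/6 < lam" "x \<in> {0..1}" "x \<notin> Ecal"
    and "\<And>k. k < p \<Longrightarrow> u k x \<in> {0,3}" "u p x \<in> {1,2}"
  shows "slope lam (Suc n) x = slope lam n x +
      (if U (if slope lam n x < 0 then 1 - (T ^^ n) x else (T ^^ n) x) = 1
         then 6 * lam * sqrt (1 + (slope lam n x)\<^sup>2)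
       else if U (if slope lam n x < 0 then 1 - (T ^^ n) x else (T ^^ n) x) = 2
         then - (6 * lam * sqrt (1 + (slope lam n x)\<^sup>2)) else 0)
    \<and> (n \<le> p \<longrightarrow> slope lam n x = 0) \<and> (p < n \<longrightarrow> slope lam n x \<noteq> 0)"
proof -
  obtain a fa b fb where ab: "consec (knots lam n) a fa b fb" "a < x" "x < b"
    and r: "(x - a)/(b - a) = (if (fb - fa)/(b - a) < 0 then 1 - (T ^^ n) x else (T ^^ n) x)"
    and c: "(n \<le> p \<longrightarrow> (fb - fa)/(b - a) = 0) \<and> (p < n \<longrightarrow> (fb - fa)/(b - a) \<noteq> 0)"
    using inv[OF assms] by blast
  have sl: "slope lam n x = (fb - fa)/(b - a)" using slope_seg[OF ab] .
  have tt: "(T ^^ n) x \<notin> {0, 1/3, 1/2, 2/3, 1}"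
    using t_avoid[OF assms(3), of n] by auto
  have rr: "(x - a)/(b - a) \<notin> {1/3, 1/2, 2/3}" using r tt by auto
  obtain a' fa' b' fb' where ab': "consec (knots lam (Suc n)) a' fa' b' fb'" "a' < x" "x < b'"
    and m': "(fb' - fa')/(b' - a') = (fb - fa)/(b - a) + (if U ((x-a)/(b-a)) = 1 then 6 * lam * sqrt (1 + ((fb - fa)/(b - a))\<^sup>2)
         else if U ((x-a)/(b-a)) = 2 then - (6 * lam * sqrt (1 + ((fb - fa)/(b - a))\<^sup>2)) else 0)"
    using step[OF ab rr] by blast
  have "slope lam (Suc n) x = (fb' - fa')/(b' - a')" using slope_seg[OF ab'] .
  then show ?thesis using m' c unfolding sl r by simp
qed

lemma finalcase:
  fixes t m K :: real
  assumes "0 < t" "t < 1" "t \<notin> {1/3, 1/2, 2/3}" "m \<noteq> 0"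
  shows "(U t \<in> {0,3} \<longrightarrow> m + (if U (if m < 0 then 1 - t else t) = 1 then K
       else if U (if m < 0 then 1 - t else t) = 2 then - K else 0) = m)
    \<and> (U t = 1 \<longrightarrow> m + (if U (if m < 0 then 1 - t else t) = 1 then K
       else if U (if m < 0 then 1 - t else t) = 2 then - K else 0) = sgn m * (\<bar>m\<bar> + K))
    \<and> (U t = 2 \<longrightarrow> m + (if U (if m < 0 then 1 - t else t) = 1 then K
       else if U (if m < 0 then 1 - t else t) = 2 then - K else 0) = sgn m * (\<bar>m\<bar> - K))"
proof -
  consider "0 < t" "t < 1/3" | "1/3 < t" "t < 1/2" | "1/2 < t" "t < 2/3" | "2/3 < t" "t < 1"
    using assms by fastforce
  then show ?thesis
  proof cases
    case 1 then show ?thesis using d0[OF 1] assms(4) by (cases "m < 0") (auto simp: sgn_if)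
  next
    case 2 then show ?thesis using d1[OF 2] assms(4) by (cases "m < 0") (auto simp: sgn_if)
  next
    case 3 then show ?thesis using d2[OF 3] assms(4) by (cases "m < 0") (auto simp: sgn_if)
  next
    case 4 then show ?thesis using d3[OF 4] assms(4) by (cases "m < 0") (auto simp: sgn_if)
  qed
qed

lemma firstcase:
  fixes t K :: real
  assumes "0 < t" "t < 1" "t \<notin> {1/3, 1/2, 2/3}"
  shows "(U t = 1 \<longrightarrow> (if U t = 1 then K else if U t = 2 then - K else 0) = K)
    \<and> (U t = 2 \<longrightarrow> (if U t = 1 then K else if U t = 2 then - K else 0) = - K)"
  by auto

theorem lemma3p3:
  fixes lam x :: real and p :: nat
  assumes "1/6 < lam" and "lam < 5/6"
    and "x \<in> {0..1}" and "x \<notin> Ecal"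
    and "beta12 x p = 0" and "beta12 x (Suc p) = 1"
  shows "(\<forall>k\<le>p. slope lam k x = 0)
    \<and> (u p x = 1 \<longrightarrow> slope lam (Suc p) x = 6 * lam)
    \<and> (u p x = 2 \<longrightarrow> slope lam (Suc p) x = - 6 * lam)
    \<and> (\<forall>n\<ge>Suc p.
         (u n x \<in> {0, 3} \<longrightarrow> slope lam (Suc n) x = slope lam n x)
       \<and> (u n x = 1 \<longrightarrow> slope lam (Suc n) x =
            sgn (slope lam n x) * (\<bar>slope lam n x\<bar> + 6 * lam * sqrt (1 + (slope lam n x)\<^sup>2)))
       \<and> (u n x = 2 \<longrightarrow> slope lam (Suc n) x =
            sgn (slope lam n x) * (\<bar>slope lam n x\<bar> - 6 * lam * sqrt (1 + (slope lam n x)\<^sup>2))))"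
proof -
  have Urange: "U y \<in> {0,1,2,3}" for y unfolding U_def by auto
  have b1: "beta 1 x p = 0" and b2: "beta 2 x p = 0" using assms(5) unfolding beta12_def by auto
  have A4: "u k x \<in> {0,3}" if "k < p" for k
    using beta0[OF b1 that] beta0[OF b2 that] Urange[of "(T ^^ k) x"] unfolding u_def by auto
  have "beta12 x (Suc p) = beta 1 x p + beta 2 x p + (if u p x = 1 then 1 else 0) + (if u p x = 2 then 1 else 0)"
    unfolding beta12_def beta_Suc by simp
  then have "(if u p x = 1 then 1 else 0) + (if u p x = 2 then 1 else (0::nat)) = 1"
    using assms(6) b1 b2 by simp
  then have A5: "u p x \<in> {1,2}" by (cases "u p x = 1"; cases "u p x = 2") auto
  note S = slopes[OF assms(1) assms(3) assms(4) A4 A5]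
  have P1: "\<forall>k\<le>p. slope lam k x = 0" using S by blast
  have key: "slope lam (Suc n) x = slope lam n x + (if U (if slope lam n x < 0 then 1 - t else t) = 1
         then 6 * lam * sqrt (1 + (slope lam n x)\<^sup>2)
       else if U (if slope lam n x < 0 then 1 - t else t) = 2
         then - (6 * lam * sqrt (1 + (slope lam n x)\<^sup>2)) else 0)"
    "u n x = U t" "0 < t" "t < 1" "t \<notin> {1/3, 1/2, 2/3}"
    "n \<le> p \<Longrightarrow> slope lam n x = 0" "p < n \<Longrightarrow> slope lam n x \<noteq> 0"
    if "t = (T ^^ n) x" for n t
  proof -
    show "slope lam (Suc n) x = slope lam n x + (if U (if slope lam n x < 0 then 1 - t else t) = 1
         then 6 * lam * sqrt (1 + (slope lam n x)\<^sup>2)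
       else if U (if slope lam n x < 0 then 1 - t else t) = 2
         then - (6 * lam * sqrt (1 + (slope lam n x)\<^sup>2)) else 0)"
      using S[of n] unfolding that by blast
    show "u n x = U t" unfolding u_def that ..
    have "t \<notin> {0, 1/3, 1/2, 2/3, 1}" "0 \<le> t" "t \<le> 1"
      using t_avoid[OF assms(4), of n] t_range[OF assms(3), of n] unfolding that by auto
    then show "0 < t" "t < 1" "t \<notin> {1/3, 1/2, 2/3}" by auto
    show "n \<le> p \<Longrightarrow> slope lam n x = 0" "p < n \<Longrightarrow> slope lam n x \<noteq> 0" using S[of n] by auto
  qed
  have cases4: "(0 < t \<and> t < 1/3) \<or> (1/3 < t \<and> t < 1/2) \<or> (1/2 < t \<and> t < 2/3) \<or> (2/3 < t \<and> t < 1)"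
    if "0 < t" "t < 1" "t \<notin> {1/3, 1/2, 2/3}" for t :: real
    using that by fastforce
  have P23: "(u p x = 1 \<longrightarrow> slope lam (Suc p) x = 6 * lam)
    \<and> (u p x = 2 \<longrightarrow> slope lam (Suc p) x = - 6 * lam)"
  proof -
    define t where "t = (T ^^ p) x"
    note k = key[OF t_def]
    have m0: "slope lam p x = 0" using k(6) by simp
    show ?thesis using k(1,2) unfolding m0 by simp
  qed
  have P4: "(u n x \<in> {0, 3} \<longrightarrow> slope lam (Suc n) x = slope lam n x)
       \<and> (u n x = 1 \<longrightarrow> slope lam (Suc n) x =
            sgn (slope lam n x) * (\<bar>slope lam n x\<bar> + 6 * lam * sqrt (1 + (slope lam n x)\<^sup>2)))
       \<and> (u n x = 2 \<longrightarrow> slope lam (Suc n) x =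
            sgn (slope lam n x) * (\<bar>slope lam n x\<bar> - 6 * lam * sqrt (1 + (slope lam n x)\<^sup>2)))"
    if "n \<ge> Suc p" for n
  proof -
    define t where "t = (T ^^ n) x"
    note k = key[OF t_def]
    have m0: "slope lam n x \<noteq> 0" using k(7) that by simp
    show ?thesis unfolding k(1) k(2)
      by (rule finalcase[OF k(3,4,5) m0])
  qed
  show ?thesis using P1 P23 P4 by blast
qed

end
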